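(* Let $G$ be a maximal outerplanar graph with at least three vertices. Then $\mathrm{fall}(G)=\{3\}$.
   Context: For a graph $G=(V,E)$ and a partition $\Pi=\{V_1,\dots,V_k\}$ of $V$, a vertex $v\in V_i$ is colorful if $v$ is adjacent to at least one vertex of each class $V_j$ with $j\neq i$. $\Pi$ is a fall $k$-coloring if every $V_i$ is an independent set and every vertex is colorful; equivalently, $V$ is partitioned into $k$ independent dominating sets. The fall set $\mathrm{fall}(G)$ is the set of all integers $k$ such that $G$ admits a fall $k$-coloring. *)

theory Defs
  imports Main
begin

definition simple_graph :: "'a set \<Rightarrow> ('a \<Rightarrow> 'a \<Rightarrow> bool) \<Rightarrow> bool" where
  "simple_graph V E \<longleftrightarrow> finite V \<and>
     (\<forall>u v. E u v \<longrightarrow> u \<in> V \<and> v \<in> V \<and> u \<noteq> v \<and> E v u)"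

text \<open>Outerplanar: the graph has a drawing with all vertices on a circle (outer face)
  and edges as pairwise non-crossing chords; combinatorially, a cyclic ordering of the
  vertices in which no two edges interleave.\<close>
definition outerplanar :: "'a set \<Rightarrow> ('a \<Rightarrow> 'a \<Rightarrow> bool) \<Rightarrow> bool" where
  "outerplanar V E \<longleftrightarrow> (\<exists>f :: 'a \<Rightarrow> nat. bij_betw f V {0..<card V} \<and>
     (\<forall>a\<in>V. \<forall>b\<in>V. \<forall>c\<in>V. \<forall>d\<in>V.
        E a b \<and> E c d \<longrightarrow> \<not> (f a < f c \<and> f c < f b \<and> f b < f d)))"

definition add_edge :: "('a \<Rightarrow> 'a \<Rightarrow> bool) \<Rightarrow> 'a \<Rightarrow> 'a \<Rightarrow> ('a \<Rightarrow> 'a \<Rightarrow> bool)" where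
  "add_edge E u v = (\<lambda>x y. E x y \<or> (x = u \<and> y = v) \<or> (x = v \<and> y = u))"

definition maximal_outerplanar :: "'a set \<Rightarrow> ('a \<Rightarrow> 'a \<Rightarrow> bool) \<Rightarrow> bool" where
  "maximal_outerplanar V E \<longleftrightarrow> simple_graph V E \<and> outerplanar V E \<and>
     (\<forall>u\<in>V. \<forall>v\<in>V. u \<noteq> v \<and> \<not> E u v \<longrightarrow> \<not> outerplanar V (add_edge E u v))"

definition fall_coloring :: "'a set \<Rightarrow> ('a \<Rightarrow> 'a \<Rightarrow> bool) \<Rightarrow> 'a set set \<Rightarrow> nat \<Rightarrow> bool" where
  "fall_coloring V E P k \<longleftrightarrow>
     \<Union>P = V \<and> {} \<notin> P \<and> (\<forall>X\<in>P. \<forall>Y\<in>P. X \<noteq> Y \<longrightarrow> X \<inter> Y = {}) \<and>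
     finite P \<and> card P = k \<and>
     (\<forall>X\<in>P. \<forall>u\<in>X. \<forall>v\<in>X. \<not> E u v) \<and>
     (\<forall>X\<in>P. \<forall>v\<in>X. \<forall>Y\<in>P. Y \<noteq> X \<longrightarrow> (\<exists>u\<in>Y. E v u))"

definition fall_set :: "'a set \<Rightarrow> ('a \<Rightarrow> 'a \<Rightarrow> bool) \<Rightarrow> nat set" where
  "fall_set V E = {k. \<exists>P. fall_coloring V E P k}"

end

theory Submission
  imports Defs
begin

definition noncross :: "'a set \<Rightarrow> ('a \<Rightarrow> 'a \<Rightarrow> bool) \<Rightarrow> ('a \<Rightarrow> nat) \<Rightarrow> bool" where
  "noncross V E f \<longleftrightarrow> (\<forall>a\<in>V. \<forall>b\<in>V. \<forall>c\<in>V. \<forall>d\<in>V.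
        E a b \<and> E c d \<longrightarrow> \<not> (f a < f c \<and> f c < f b \<and> f b < f d))"

definition sg :: "'a set \<Rightarrow> ('a \<Rightarrow> 'a \<Rightarrow> bool) \<Rightarrow> bool" where
  "sg V E \<longleftrightarrow> (\<forall>u v. E u v \<longrightarrow> u \<in> V \<and> v \<in> V \<and> u \<noteq> v \<and> E v u)"

definition sat :: "'a set \<Rightarrow> ('a \<Rightarrow> 'a \<Rightarrow> bool) \<Rightarrow> ('a \<Rightarrow> nat) \<Rightarrow> bool" where
  "sat V E f \<longleftrightarrow> (\<forall>u\<in>V. \<forall>v\<in>V. u \<noteq> v \<and> \<not> E u v \<longrightarrow> \<not> noncross V (add_edge E u v) f)"

lemma cross_new:
  assumes nc: "noncross V E f" and ncn: "\<not> noncross V (add_edge E u v) f"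
    and g: "sg V E"
  shows "\<exists>y\<in>V. \<exists>z\<in>V. E y z \<and> ((f u < f y \<and> f y < f v \<and> (f z < f u \<or> f z > f v)) \<or>
            (f v < f y \<and> f y < f u \<and> (f z < f v \<or> f z > f u)))"
proof -
  from ncn obtain a b c d where abcd: "a \<in> V" "b \<in> V" "c \<in> V" "d \<in> V"
    "add_edge E u v a b" "add_edge E u v c d" "f a < f c" "f c < f b" "f b < f d"
    unfolding noncross_def by blast
  have gs: "\<And>x y. E x y \<Longrightarrow> E y x" using g unfolding sg_def by blast
  show ?thesis
  proof (cases "E a b")
    case True
    then have "\<not> E c d" using nc abcd unfolding noncross_def by blast
    then have "(c = u \<and> d = v) \<or> (c = v \<and> d = u)" using abcd(6) unfolding add_edge_def by blast
    moreover have "E b a" using True gs by blast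
    ultimately show ?thesis using abcd by (intro bexI[of _ b] bexI[of _ a]) auto
  next
    case False
    then have ab: "(a = u \<and> b = v) \<or> (a = v \<and> b = u)" using abcd(5) unfolding add_edge_def by blast
    show ?thesis
    proof (cases "E c d")
      case True
      then show ?thesis using ab abcd by (intro bexI[of _ c] bexI[of _ d]) auto
    next
      case False
      then have "(c = u \<and> d = v) \<or> (c = v \<and> d = u)" using abcd(6) unfolding add_edge_def by blast
      then show ?thesis using ab abcd by auto
    qed
  qed
qed

lemma ear:
  assumes fin: "finite V" and inj: "inj_on f V" and g: "sg V E" and nc: "noncross V E f"
    and st: "sat V E f" and c3: "card V \<ge> 3"
  shows "\<exists>w p q. w \<in> V \<and> p \<in> V \<and> q \<in> V \<and> f p < f w \<and> f w < f q \<and>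
     E w p \<and> E w q \<and> E p q \<and> (\<forall>x. E w x \<longrightarrow> x = p \<or> x = q) \<and>
     (\<forall>y\<in>V. \<not> (f p < f y \<and> f y < f w)) \<and> (\<forall>y\<in>V. \<not> (f w < f y \<and> f y < f q))"
proof -
  have gs: "\<And>x y. E x y \<Longrightarrow> E y x" and gV: "\<And>x y. E x y \<Longrightarrow> x \<in> V \<and> y \<in> V"
    using g unfolding sg_def by blast+
  have ne: "V \<noteq> {}" using c3 by auto
  have finj: "\<And>x y. x \<in> V \<Longrightarrow> y \<in> V \<Longrightarrow> f x = f y \<Longrightarrow> x = y"
    using inj by (meson inj_onD)
  have "Min (f ` V) \<in> f ` V" using fin ne by simp
  then obtain m where m: "m \<in> V" "f m = Min (f ` V)" by auto
  have mle: "\<And>x. x \<in> V \<Longrightarrow> f m \<le> f x" using m fin by simp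
  have "Max (f ` V) \<in> f ` V" using fin ne by simp
  then obtain M where M: "M \<in> V" "f M = Max (f ` V)" by auto
  have Mge: "\<And>x. x \<in> V \<Longrightarrow> f x \<le> f M" using M fin by simp
  have "\<not> V \<subseteq> {m, M}"
  proof
    assume "V \<subseteq> {m, M}"
    then have "card V \<le> card {m, M}" by (intro card_mono) auto
    also have "\<dots> \<le> 2" by (simp add: card_insert_le_m1)
    finally show False using c3 by simp
  qed
  then obtain y0 where y0: "y0 \<in> V" "y0 \<noteq> m" "y0 \<noteq> M" by auto
  have my0: "f m < f y0" using mle[OF y0(1)] finj[OF m(1) y0(1)] y0 by force
  have y0M: "f y0 < f M" using Mge[OF y0(1)] finj[OF M(1) y0(1)] y0 by force
  have EmM: "E m M"
  proof (rule ccontr)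
    assume "\<not> E m M"
    moreover have "m \<noteq> M" using my0 y0M by auto
    ultimately have "\<not> noncross V (add_edge E m M) f" using st m M unfolding sat_def by blast
    from cross_new[OF nc this g] obtain y z where "y \<in> V" "z \<in> V"
      "(f m < f y \<and> f y < f M \<and> (f z < f m \<or> f z > f M)) \<or>
            (f M < f y \<and> f y < f m \<and> (f z < f M \<or> f z > f m))" by blast
    then show False using mle Mge by fastforce
  qed
  define P where "P = (\<lambda>(a, b). a \<in> V \<and> b \<in> V \<and> E a b \<and> f a < f b \<and> (\<exists>y\<in>V. f a < f y \<and> f y < f b))"
  have "P (m, M)" unfolding P_def using m M EmM my0 y0M y0 by auto
  from ex_has_least_nat[of P, OF this, of "\<lambda>(a, b). f b - f a"]
  obtain ab where ab: "P ab" "\<forall>y. P y \<longrightarrow> (case ab of (a, b) \<Rightarrow> f b - f a) \<le> (case y of (a, b) \<Rightarrow> f b - f a)"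
    by blast
  obtain a b where abd: "ab = (a, b)" by (cases ab)
  have Pab: "a \<in> V" "b \<in> V" "E a b" "f a < f b" and "\<exists>y\<in>V. f a < f y \<and> f y < f b"
    using ab(1) unfolding abd P_def by auto
  then obtain w where w: "w \<in> V" "f a < f w" "f w < f b" by blast
  have minab: "\<And>a' b'. a' \<in> V \<Longrightarrow> b' \<in> V \<Longrightarrow> E a' b' \<Longrightarrow> f a' < f b' \<Longrightarrow> y \<in> V \<Longrightarrow> f a' < f y \<Longrightarrow> f y < f b'
      \<Longrightarrow> f b - f a \<le> f b' - f a'" for y
  proof -
    fix a' b' assume "a' \<in> V" "b' \<in> V" "E a' b'" "f a' < f b'" "y \<in> V" "f a' < f y" "f y < f b'"
    then have "P (a', b')" unfolding P_def by auto
    then show "f b - f a \<le> f b' - f a'" using ab(2) abd by fastforce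
  qed
  have nbr: "\<not> (y \<in> V \<and> ((f w < f y \<and> f y < f x) \<or> (f x < f y \<and> f y < f w)))" if "E w x" for x y
  proof
    assume yy: "y \<in> V \<and> ((f w < f y \<and> f y < f x) \<or> (f x < f y \<and> f y < f w))"
    have xV: "x \<in> V" using gV that by blast
    have "\<not> f x > f b" using nc Pab w xV that unfolding noncross_def by blast
    moreover have "\<not> f x < f a" using nc Pab w xV gs[OF that] unfolding noncross_def by blast
    ultimately have xr: "f a \<le> f x" "f x \<le> f b" by auto
    show False
    proof (cases "f w < f x")
      case True
      then have "f w < f y" "f y < f x" using yy by auto
      then have "f b - f a \<le> f x - f w" using minab[of w x y] w xV that yy True by blast
      then show False using xr w True by linarith
    next
      case False
      then have "f x < f w" using yy by auto
      then have "f x < f y" "f y < f w" using yy by auto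
      then have "f b - f a \<le> f w - f x" using minab[of x w y] w xV gs[OF that] yy \<open>f x < f w\<close> by blast
      then show False using xr w \<open>f x < f w\<close> by linarith
    qed
  qed
  obtain p where p: "p \<in> V" "f p = Max (f ` {y\<in>V. f y < f w})"
    using Max_in[of "f ` {y\<in>V. f y < f w}"] fin w Pab by fastforce
  have pmax: "\<And>x. x \<in> V \<Longrightarrow> f x < f w \<Longrightarrow> f x \<le> f p" using p fin by simp
  have pw: "f p < f w" using Max_in[of "f ` {y\<in>V. f y < f w}"] fin w Pab p by fastforce
  obtain q where q: "q \<in> V" "f q = Min (f ` {y\<in>V. f w < f y})"
    using Min_in[of "f ` {y\<in>V. f w < f y}"] fin w Pab by fastforce
  have qmin: "\<And>x. x \<in> V \<Longrightarrow> f w < f x \<Longrightarrow> f q \<le> f x" using q fin by simp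
  have wq: "f w < f q" using Min_in[of "f ` {y\<in>V. f w < f y}"] fin w Pab q by fastforce
  have btw1: "\<forall>y\<in>V. \<not> (f p < f y \<and> f y < f w)" using pmax by fastforce
  have btw2: "\<forall>y\<in>V. \<not> (f w < f y \<and> f y < f q)" using qmin by fastforce
  have nb: "x = p \<or> x = q" if "E w x" for x
  proof -
    have xV: "x \<in> V" using gV that by blast
    have "x \<noteq> w" using g that unfolding sg_def by blast
    then have "f x \<noteq> f w" using finj xV w by blast
    then consider "f x < f w" | "f w < f x" by linarith
    then show ?thesis
    proof cases
      case 1
      then have "f x \<le> f p" using pmax xV by blast
      moreover have "\<not> f x < f p" using nbr[OF that, of p] p pw 1 by blast
      ultimately show ?thesis using finj xV p by (metis le_neq_implies_less)
    next
      case 2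
      then have "f q \<le> f x" using qmin xV by blast
      moreover have "\<not> f q < f x" using nbr[OF that, of q] q wq 2 by blast
      ultimately show ?thesis using finj xV q by (metis le_neq_implies_less)
    qed
  qed
  have Ewp: "E w p"
  proof (rule ccontr)
    assume "\<not> E w p"
    moreover have "w \<noteq> p" using pw by auto
    ultimately have "\<not> noncross V (add_edge E w p) f" using st w p unfolding sat_def by blast
    from cross_new[OF nc this g] obtain y z where "y \<in> V"
      "(f w < f y \<and> f y < f p) \<or> (f p < f y \<and> f y < f w)" by blast
    then show False using btw1 pw by fastforce
  qed
  have Ewq: "E w q"
  proof (rule ccontr)
    assume "\<not> E w q"
    moreover have "w \<noteq> q" using wq by auto
    ultimately have "\<not> noncross V (add_edge E w q) f" using st w q unfolding sat_def by blast
    from cross_new[OF nc this g] obtain y z where "y \<in> V"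
      "(f w < f y \<and> f y < f q) \<or> (f q < f y \<and> f y < f w)" by blast
    then show False using btw2 wq by fastforce
  qed
  have Epq: "E p q"
  proof (rule ccontr)
    assume "\<not> E p q"
    moreover have "p \<noteq> q" using wq pw by auto
    ultimately have "\<not> noncross V (add_edge E p q) f" using st p q unfolding sat_def by blast
    from cross_new[OF nc this g] obtain y z where yz: "y \<in> V" "z \<in> V" "E y z"
      "(f p < f y \<and> f y < f q \<and> (f z < f p \<or> f z > f q)) \<or>
            (f q < f y \<and> f y < f p \<and> (f z < f q \<or> f z > f p))" by blast
    then have "f p < f y" "f y < f q" "f z < f p \<or> f z > f q" using pw wq by auto
    then have "y = w" using btw1 btw2 yz finj w by (metis linorder_neqE_nat)
    then have "z = p \<or> z = q" using nb yz by blast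
    then show False using \<open>f z < f p \<or> f z > f q\<close> pw wq by auto
  qed
  show ?thesis using w p q pw wq Ewp Ewq Epq nb btw1 btw2 by blast
qed


lemma third_col:
  fixes a b :: nat assumes "a < 3" "b < 3" "a \<noteq> b"
  shows "3 - a - b < 3" "3 - a - b \<noteq> a" "3 - a - b \<noteq> b"
    "\<And>i. i < 3 \<Longrightarrow> i = 3 - a - b \<or> i = a \<or> i = b"
proof -
  have "a \<in> {0,1,2}" "b \<in> {0,1,2}" using assms by auto
  then show "3 - a - b < 3" "3 - a - b \<noteq> a" "3 - a - b \<noteq> b"
    "\<And>i. i < 3 \<Longrightarrow> i = 3 - a - b \<or> i = a \<or> i = b" using assms by auto
qed

lemma color:
  "finite V \<Longrightarrow> inj_on f V \<Longrightarrow> sg V E \<Longrightarrow> noncross V E f \<Longrightarrow> sat V E f \<Longrightarrow> card V \<ge> 3 \<Longrightarrow>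
   \<exists>col. (\<forall>v\<in>V. col v < (3::nat)) \<and> (\<forall>u v. E u v \<longrightarrow> col u \<noteq> col v) \<and>
     (\<forall>v\<in>V. \<forall>i<3. i \<noteq> col v \<longrightarrow> (\<exists>u. E v u \<and> col u = i))"
proof (induction "card V" arbitrary: V E rule: less_induct)
  case less
  note fin = less.prems(1) and inj = less.prems(2) and g = less.prems(3) and nc = less.prems(4)
    and st = less.prems(5) and c3 = less.prems(6)
  have gs: "\<And>x y. E x y \<Longrightarrow> E y x" and gV: "\<And>x y. E x y \<Longrightarrow> x \<in> V \<and> y \<in> V"
    and girr: "\<And>x y. E x y \<Longrightarrow> x \<noteq> y"
    using g unfolding sg_def by blast+
  obtain w p q where wpq: "w \<in> V" "p \<in> V" "q \<in> V" "f p < f w" "f w < f q"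
     "E w p" "E w q" "E p q" and nb: "\<And>x. E w x \<Longrightarrow> x = p \<or> x = q" and
     btw1: "\<forall>y\<in>V. \<not> (f p < f y \<and> f y < f w)" and btw2: "\<forall>y\<in>V. \<not> (f w < f y \<and> f y < f q)"
    using ear[OF fin inj g nc st c3] by blast
  have dist: "w \<noteq> p" "w \<noteq> q" "p \<noteq> q" using wpq by auto
  show ?case
  proof (cases "card V = 3")
    case True
    have "{p, w, q} \<subseteq> V" using wpq by auto
    moreover have "card {p, w, q} = 3" using dist by auto
    ultimately have V: "V = {p, w, q}" using True fin by (metis card_subset_eq)
    define col where "col = (\<lambda>x. if x = p then 0 else if x = q then 1 else (2::nat))"
    have "\<forall>v\<in>V. col v < 3" unfolding col_def by auto
    moreover have "\<forall>u v. E u v \<longrightarrow> col u \<noteq> col v"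
    proof (intro allI impI)
      fix u v assume "E u v"
      then have "u \<in> V" "v \<in> V" "u \<noteq> v" using gV girr by auto
      then show "col u \<noteq> col v" unfolding col_def V using dist by auto
    qed
    moreover have "\<forall>v\<in>V. \<forall>i<3. i \<noteq> col v \<longrightarrow> (\<exists>u. E v u \<and> col u = i)"
    proof (intro ballI allI impI)
      fix v i assume vi: "v \<in> V" "(i::nat) < 3" "i \<noteq> col v"
      have Es: "E p q" "E q p" "E w p" "E p w" "E w q" "E q w" using wpq gs by blast+
      have cs: "col p = 0" "col q = 1" "col w = 2" unfolding col_def using dist by auto
      have "i = 0 \<or> i = 1 \<or> i = 2" using vi by auto
      then show "\<exists>u. E v u \<and> col u = i" using vi(1,3) Es cs unfolding V by auto
    qed
    ultimately show ?thesis by blast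
  next
    case False
    define V' where "V' = V - {w}"
    define E' where "E' = (\<lambda>x y. E x y \<and> x \<noteq> w \<and> y \<noteq> w)"
    have cV': "card V' < card V" "card V' \<ge> 3" using False c3 fin wpq(1) unfolding V'_def
      by (auto simp: card_Diff1_less card_Diff_singleton)
    have fin': "finite V'" using fin unfolding V'_def by auto
    have inj': "inj_on f V'" using inj unfolding V'_def by (rule inj_on_subset) auto
    have g': "sg V' E'" using g unfolding sg_def V'_def E'_def by auto
    have nc': "noncross V' E' f" using nc unfolding noncross_def V'_def E'_def by auto
    have st': "sat V' E' f" unfolding sat_def
    proof (intro ballI impI)
      fix u v assume uv: "u \<in> V'" "v \<in> V'" "u \<noteq> v \<and> \<not> E' u v"
      then have uvw: "u \<noteq> w" "v \<noteq> w" "u \<in> V" "v \<in> V" unfolding V'_def by auto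
      then have "\<not> E u v" using uv unfolding E'_def by auto
      then have "\<not> noncross V (add_edge E u v) f" using st uv uvw unfolding sat_def by blast
      then obtain a b c d where abcd: "a \<in> V" "b \<in> V" "c \<in> V" "d \<in> V"
        "add_edge E u v a b" "add_edge E u v c d" "f a < f c" "f c < f b" "f b < f d"
        unfolding noncross_def by blast
      have nbw: "\<And>x. add_edge E u v w x \<Longrightarrow> x = p \<or> x = q"
        using nb uvw unfolding add_edge_def by blast
      have nbw2: "\<And>x. add_edge E u v x w \<Longrightarrow> x = p \<or> x = q"
        using nb uvw gs unfolding add_edge_def by blast
      have "a \<noteq> w"
      proof
        assume "a = w"
        then have "b = p \<or> b = q" using nbw abcd(5) by blast
        then show False using abcd btw2 wpq \<open>a = w\<close> by auto
      qed
      moreover have "b \<noteq> w"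
      proof
        assume "b = w"
        then have "a = p \<or> a = q" using nbw2 abcd(5) by blast
        then show False using abcd btw1 wpq \<open>b = w\<close> by auto
      qed
      moreover have "c \<noteq> w"
      proof
        assume "c = w"
        then have "d = p \<or> d = q" using nbw abcd(6) by blast
        then show False using abcd btw2 wpq \<open>c = w\<close> by auto
      qed
      moreover have "d \<noteq> w"
      proof
        assume "d = w"
        then have "c = p \<or> c = q" using nbw2 abcd(6) by blast
        then show False using abcd btw1 wpq \<open>d = w\<close> by auto
      qed
      ultimately show "\<not> noncross V' (add_edge E' u v) f"
        unfolding noncross_def using abcd unfolding V'_def E'_def add_edge_def by blast
    qed
    from less.hyps[OF cV'(1) fin' inj' g' nc' st' cV'(2)] obtain col' where
      col': "\<forall>v\<in>V'. col' v < (3::nat)" "\<forall>u v. E' u v \<longrightarrow> col' u \<noteq> col' v"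
       "\<forall>v\<in>V'. \<forall>i<3. i \<noteq> col' v \<longrightarrow> (\<exists>u. E' v u \<and> col' u = i)" by blast
    have pq': "p \<in> V'" "q \<in> V'" "E' p q" using wpq dist unfolding V'_def E'_def by auto
    have cpq: "col' p < 3" "col' q < 3" "col' p \<noteq> col' q" using col' pq' by auto
    define col where "col = (\<lambda>x. if x = w then 3 - col' p - col' q else col' x)"
    have cw: "col w < 3" "col w \<noteq> col' p" "col w \<noteq> col' q" "col p = col' p" "col q = col' q"
      "\<And>i. i < 3 \<Longrightarrow> i = col w \<or> i = col' p \<or> i = col' q"
      using third_col[OF cpq] dist unfolding col_def by auto
    have "\<forall>v\<in>V. col v < 3" using col' cw unfolding V'_def col_def by auto
    moreover have "\<forall>u v. E u v \<longrightarrow> col u \<noteq> col v"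
    proof (intro allI impI)
      fix u v assume uv: "E u v"
      show "col u \<noteq> col v"
      proof (cases "u = w \<or> v = w")
        case True
        then show ?thesis using nb gs uv cw girr by metis
      next
        case False
        then have "E' u v" using uv unfolding E'_def by auto
        then show ?thesis using col' False unfolding col_def by auto
      qed
    qed
    moreover have "\<forall>v\<in>V. \<forall>i<3. i \<noteq> col v \<longrightarrow> (\<exists>u. E v u \<and> col u = i)"
    proof (intro ballI allI impI)
      fix v i assume vi: "v \<in> V" "(i::nat) < 3" "i \<noteq> col v"
      show "\<exists>u. E v u \<and> col u = i"
      proof (cases "v = w")
        case True
        then show ?thesis using cw vi wpq by metis
      next
        case False
        then have "v \<in> V'" "i \<noteq> col' v" using vi unfolding V'_def col_def by auto
        then obtain u where "E' v u" "col' u = i" using col' vi by blast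
        then show ?thesis unfolding E'_def col_def by auto
      qed
    qed
    ultimately show ?thesis by blast
  qed
qed


theorem theorem3:
  fixes V :: "'a set" and E :: "'a \<Rightarrow> 'a \<Rightarrow> bool"
  assumes "maximal_outerplanar V E"
    and "card V \<ge> 3"
  shows "fall_set V E = {3}"
proof -
  have simp: "simple_graph V E" and op: "outerplanar V E" and
    mx: "\<forall>u\<in>V. \<forall>v\<in>V. u \<noteq> v \<and> \<not> E u v \<longrightarrow> \<not> outerplanar V (add_edge E u v)"
    using assms(1) unfolding maximal_outerplanar_def by blast+
  obtain f where bij: "bij_betw f V {0..<card V}" and nc: "noncross V E f"
    using op unfolding outerplanar_def noncross_def[symmetric] by blast
  have fin: "finite V" using simp unfolding simple_graph_def by blast
  have g: "sg V E" using simp unfolding simple_graph_def sg_def by blast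
  have inj: "inj_on f V" using bij by (rule bij_betw_imp_inj_on)
  have st: "sat V E f" unfolding sat_def
  proof (intro ballI impI notI)
    fix u v assume "u \<in> V" "v \<in> V" "u \<noteq> v \<and> \<not> E u v" "noncross V (add_edge E u v) f"
    then have "outerplanar V (add_edge E u v)" using bij unfolding outerplanar_def noncross_def[symmetric] by blast
    then show False using mx \<open>u \<in> V\<close> \<open>v \<in> V\<close> \<open>u \<noteq> v \<and> \<not> E u v\<close> by blast
  qed
  have gs: "\<And>x y. E x y \<Longrightarrow> E y x" and gV: "\<And>x y. E x y \<Longrightarrow> x \<in> V \<and> y \<in> V"
    and girr: "\<And>x y. E x y \<Longrightarrow> x \<noteq> y"
    using g unfolding sg_def by blast+
  obtain w p q where wpq: "w \<in> V" "p \<in> V" "q \<in> V" "f p < f w" "f w < f q"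
     "E w p" "E w q" "E p q" and nb: "\<And>x. E w x \<Longrightarrow> x = p \<or> x = q"
    using ear[OF fin inj g nc st assms(2)] by blast
  have dist: "w \<noteq> p" "w \<noteq> q" "p \<noteq> q" using wpq by auto
  show ?thesis
  proof
    show "fall_set V E \<subseteq> {3}"
    proof
      fix k assume "k \<in> fall_set V E"
      then obtain P where P: "\<Union>P = V" "{} \<notin> P" "\<forall>X\<in>P. \<forall>Y\<in>P. X \<noteq> Y \<longrightarrow> X \<inter> Y = {}"
        "finite P" "card P = k" "\<forall>X\<in>P. \<forall>u\<in>X. \<forall>v\<in>X. \<not> E u v"
        "\<forall>X\<in>P. \<forall>v\<in>X. \<forall>Y\<in>P. Y \<noteq> X \<longrightarrow> (\<exists>u\<in>Y. E v u)"
        unfolding fall_set_def fall_coloring_def by blast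
      obtain Xw where Xw: "Xw \<in> P" "w \<in> Xw" using P(1) wpq by blast
      obtain Xp where Xp: "Xp \<in> P" "p \<in> Xp" using P(1) wpq by blast
      obtain Xq where Xq: "Xq \<in> P" "q \<in> Xq" using P(1) wpq by blast
      have d3: "Xw \<noteq> Xp" "Xw \<noteq> Xq" "Xp \<noteq> Xq"
        using P(6) Xw Xp wpq(6) apply blast
        using P(6) Xw Xq wpq(7) apply blast
        using P(6) Xp Xq wpq(8) by blast
      have "card {Xw, Xp, Xq} = 3" using d3 by auto
      moreover have "card {Xw, Xp, Xq} \<le> card P" using Xw Xp Xq P(4) by (intro card_mono) auto
      ultimately have k3: "3 \<le> k" using P(5) by simp
      have uniq: "\<And>x A B. A \<in> P \<Longrightarrow> B \<in> P \<Longrightarrow> x \<in> A \<Longrightarrow> x \<in> B \<Longrightarrow> A = B" using P(3) by blast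
      have "P - {Xw} \<subseteq> {Xp, Xq}"
      proof
        fix Y assume "Y \<in> P - {Xw}"
        then obtain u where "u \<in> Y" "E w u" using P(7) Xw by blast
        then have "u = p \<or> u = q" using nb by blast
        then have "Y = Xp \<or> Y = Xq"
        proof
          assume "u = p" then show ?thesis using uniq[of Y Xp p] \<open>u \<in> Y\<close> \<open>Y \<in> P - {Xw}\<close> Xp by blast
        next
          assume "u = q" then show ?thesis using uniq[of Y Xq q] \<open>u \<in> Y\<close> \<open>Y \<in> P - {Xw}\<close> Xq by blast
        qed
        then show "Y \<in> {Xp, Xq}" by blast
      qed
      then have "card (P - {Xw}) \<le> card {Xp, Xq}" by (intro card_mono) auto
      also have "\<dots> \<le> 2" by (simp add: card_insert_le_m1)
      finally have "card P - 1 \<le> 2" using Xw P(4) by simp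
      then show "k \<in> {3}" using k3 P(5) by simp
    qed
  next
    obtain col where col: "\<forall>v\<in>V. col v < (3::nat)" "\<forall>u v. E u v \<longrightarrow> col u \<noteq> col v"
       "\<forall>v\<in>V. \<forall>i<3. i \<noteq> col v \<longrightarrow> (\<exists>u. E v u \<and> col u = i)"
      using color[OF fin inj g nc st assms(2)] by blast
    define cl where "cl = (\<lambda>i. {v\<in>V. col v = i})"
    define P where "P = cl ` {0,1,2}"
    have clne: "cl i \<noteq> {}" if "i < 3" for i
    proof -
      show ?thesis
      proof (cases "col w = i")
        case True then show ?thesis unfolding cl_def using wpq by auto
      next
        case False
        then have "i \<noteq> col w" by simp
        then have "\<exists>u. E w u \<and> col u = i" using col(3) wpq(1) that by blast
        then obtain u where "E w u" "col u = i" by blast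
        then show ?thesis unfolding cl_def using gV by auto
      qed
    qed
    have injcl: "inj_on cl {0,1,2}"
    proof (rule inj_onI)
      fix i j assume ij: "i \<in> {0,1,2::nat}" "j \<in> {0,1,2::nat}" "cl i = cl j"
      then have "i < 3" by auto
      then obtain v where "v \<in> cl i" using clne[of i] by blast
      then show "i = j" using ij unfolding cl_def by auto
    qed
    have "fall_coloring V E P 3" unfolding fall_coloring_def
    proof (intro conjI)
      show "\<Union>P = V" unfolding P_def cl_def using col(1) by fastforce
      show "{} \<notin> P"
      proof
        assume "{} \<in> P"
        then obtain i where "i \<in> {0,1,2::nat}" "cl i = {}" unfolding P_def by auto
        then show False using clne[of i] by auto
      qed
      show "\<forall>X\<in>P. \<forall>Y\<in>P. X \<noteq> Y \<longrightarrow> X \<inter> Y = {}" unfolding P_def cl_def by auto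
      show "finite P" unfolding P_def by simp
      show "card P = 3" unfolding P_def using card_image[OF injcl] by simp
      show "\<forall>X\<in>P. \<forall>u\<in>X. \<forall>v\<in>X. \<not> E u v" unfolding P_def cl_def using col(2) by fastforce
      show "\<forall>X\<in>P. \<forall>v\<in>X. \<forall>Y\<in>P. Y \<noteq> X \<longrightarrow> (\<exists>u\<in>Y. E v u)"
      proof (intro ballI impI)
        fix X v Y assume a: "X \<in> P" "v \<in> X" "Y \<in> P" "Y \<noteq> X"
        obtain i j where ij0: "i \<in> {0,1,2::nat}" "j \<in> {0,1,2::nat}" "X = cl i" "Y = cl j"
          using a unfolding P_def by blast
        then have ij: "i < 3" "j < 3" "X = cl i" "Y = cl j" by auto
        then have "j \<noteq> col v" "v \<in> V" using a unfolding cl_def by auto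
        then obtain u where "E v u" "col u = j" using col(3) ij by blast
        then show "\<exists>u\<in>Y. E v u" using ij gV unfolding cl_def by blast
      qed
    qed
    then show "{3} \<subseteq> fall_set V E" unfolding fall_set_def by blast
  qed
qed

end
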